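(* Let $k\ge1$, let $F$ be a partially colored forest and let $F'$ be an induced connected subgraph of $F$ (with the partial coloring inherited from $F$). If no vertex $v\in V(F')$ has a colored neighbor in $V(F)\setminus V(F')$, and Bob can win the $k$-Expanded Coloring Game on $F'$, then Bob can win the $k$-coloring game on $F$.
   Context: A partial coloring of a graph assigns to some vertices colors from a fixed set $C$ of $k$ colors so that adjacent colored vertices get different colors; a color is legal for an uncolored vertex $v$ if no neighbor of $v$ has that color. The $k$-coloring game on a partially colored graph: Alice and Bob alternate turns, Alice first, each coloring an uncolored vertex with a legal color from $C$; Bob wins if at some point an uncolored vertex has no legal color, Alice wins if all vertices become colored. The $k$-Expanded Coloring Game ($k$-ECG) on a partially colored forest is the same as the $k$-coloring game except that on her turn Alice may choose not to color a vertex, and if she does not color a vertex she may instead add to the forest a single new colored leaf (a new vertex joined to exactly one existing vertex, colored with a color from $C$). *)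

theory Defs
  imports Main
begin

(* Colour set C = {..<k}.  A partial colouring is col :: 'v \<Rightarrow> nat option
   (None = uncoloured). *)

definition is_cycle :: "('v \<times> 'v) set \<Rightarrow> 'v list \<Rightarrow> bool" where
  "is_cycle E xs \<longleftrightarrow> length xs \<ge> 3 \<and> distinct xs \<and>
     (\<forall>i. i + 1 < length xs \<longrightarrow> (xs ! i, xs ! (i + 1)) \<in> E) \<and> (last xs, hd xs) \<in> E"

definition is_forest :: "'v set \<Rightarrow> ('v \<times> 'v) set \<Rightarrow> bool" where
  "is_forest V E \<longleftrightarrow> finite V \<and> E \<subseteq> V \<times> V \<and> sym E \<and> irrefl E \<and>
     \<not> (\<exists>xs. set xs \<subseteq> V \<and> is_cycle E xs)"

definition proper_partial_coloring :: "nat \<Rightarrow> 'v set \<Rightarrow> ('v \<times> 'v) set \<Rightarrow> ('v \<Rightarrow> nat option) \<Rightarrow> bool" where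
  "proper_partial_coloring k V E col \<longleftrightarrow>
     (\<forall>v\<in>V. \<forall>c. col v = Some c \<longrightarrow> c < k) \<and>
     (\<forall>(u, v)\<in>E. col u \<noteq> None \<longrightarrow> col u \<noteq> col v)"

definition partially_colored_forest :: "nat \<Rightarrow> 'v set \<Rightarrow> ('v \<times> 'v) set \<Rightarrow> ('v \<Rightarrow> nat option) \<Rightarrow> bool" where
  "partially_colored_forest k V E col \<longleftrightarrow> is_forest V E \<and> proper_partial_coloring k V E col"

definition connected_graph :: "'v set \<Rightarrow> ('v \<times> 'v) set \<Rightarrow> bool" where
  "connected_graph V E \<longleftrightarrow> V \<noteq> {} \<and> (\<forall>u\<in>V. \<forall>w\<in>V. (u, w) \<in> E\<^sup>*)"

definition induced_edges :: "('v \<times> 'v) set \<Rightarrow> 'v set \<Rightarrow> ('v \<times> 'v) set" where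
  "induced_edges E W = E \<inter> (W \<times> W)"

definition legal :: "nat \<Rightarrow> ('v \<times> 'v) set \<Rightarrow> ('v \<Rightarrow> nat option) \<Rightarrow> 'v \<Rightarrow> nat \<Rightarrow> bool" where
  "legal k E col v c \<longleftrightarrow> c < k \<and> (\<forall>u. (u, v) \<in> E \<longrightarrow> col u \<noteq> Some c)"

(* some uncoloured vertex has no legal colour: Bob has won *)
definition stuck :: "nat \<Rightarrow> 'v set \<Rightarrow> ('v \<times> 'v) set \<Rightarrow> ('v \<Rightarrow> nat option) \<Rightarrow> bool" where
  "stuck k V E col \<longleftrightarrow> (\<exists>v\<in>V. col v = None \<and> (\<forall>c. \<not> legal k E col v c))"

definition has_uncolored :: "'v set \<Rightarrow> ('v \<Rightarrow> nat option) \<Rightarrow> bool" where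
  "has_uncolored V col \<longleftrightarrow> (\<exists>v\<in>V. col v = None)"

definition color_move :: "nat \<Rightarrow> 'v set \<Rightarrow> ('v \<times> 'v) set \<Rightarrow> ('v \<Rightarrow> nat option) \<Rightarrow> ('v \<Rightarrow> nat option) \<Rightarrow> bool" where
  "color_move k V E col col' \<longleftrightarrow>
     (\<exists>v\<in>V. \<exists>c. col v = None \<and> legal k E col v c \<and> col' = col(v := Some c))"

(* k-coloring game on (V,E,col).  cg_bobA: Alice to move and Bob has a strategy forcing a win
   (in finitely many moves); cg_bobB: the same with Bob to move. *)
inductive cg_bobA and cg_bobB for k :: nat and V :: "'v set" and E :: "('v \<times> 'v) set" where
  cgA_stuck: "stuck k V E col \<Longrightarrow> cg_bobA k V E col"
| cgA_move: "has_uncolored V col \<Longrightarrow> (\<And>col'. color_move k V E col col' \<Longrightarrow> cg_bobB k V E col')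
      \<Longrightarrow> cg_bobA k V E col"
| cgB_stuck: "stuck k V E col \<Longrightarrow> cg_bobB k V E col"
| cgB_move: "color_move k V E col col' \<Longrightarrow> cg_bobA k V E col' \<Longrightarrow> cg_bobB k V E col"

definition bob_wins_coloring_game :: "nat \<Rightarrow> 'v set \<Rightarrow> ('v \<times> 'v) set \<Rightarrow> ('v \<Rightarrow> nat option) \<Rightarrow> bool" where
  "bob_wins_coloring_game k V E col \<longleftrightarrow> cg_bobA k V E col"

(* k-Expanded Coloring Game.  Alice may colour a vertex, pass, or add a new coloured leaf
   (fresh vertex x attached to an existing vertex u, coloured c \<in> C, properly). *)
inductive ecg_bobA and ecg_bobB for k :: nat where
  ecgA_stuck: "stuck k V E col \<Longrightarrow> ecg_bobA k V E col"
| ecgA_move: "has_uncolored V col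
      \<Longrightarrow> (\<And>col'. color_move k V E col col' \<Longrightarrow> ecg_bobB k V E col')
      \<Longrightarrow> ecg_bobB k V E col
      \<Longrightarrow> (\<And>u x c. u \<in> V \<Longrightarrow> x \<notin> V \<Longrightarrow> c < k \<Longrightarrow> col u \<noteq> Some c \<Longrightarrow>
             ecg_bobB k (insert x V) (E \<union> {(x, u), (u, x)}) (col(x := Some c)))
      \<Longrightarrow> ecg_bobA k V E col"
| ecgB_stuck: "stuck k V E col \<Longrightarrow> ecg_bobB k V E col"
| ecgB_move: "color_move k V E col col' \<Longrightarrow> ecg_bobA k V E col' \<Longrightarrow> ecg_bobB k V E col"

definition bob_wins_ECG :: "nat \<Rightarrow> 'v set \<Rightarrow> ('v \<times> 'v) set \<Rightarrow> ('v \<Rightarrow> nat option) \<Rightarrow> bool" where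
  "bob_wins_ECG k V E col \<longleftrightarrow> ecg_bobA k V E col"

end

theory Submission imports Defs begin

fun epath :: "('v \<times> 'v) set \<Rightarrow> 'v list \<Rightarrow> bool" where
  "epath E [] = True"
| "epath E [x] = True"
| "epath E (x # y # xs) = ((x, y) \<in> E \<and> epath E (y # xs))"

lemma epath_nth: "epath E xs \<Longrightarrow> i + 1 < length xs \<Longrightarrow> (xs ! i, xs ! (i + 1)) \<in> E"
proof (induction E xs arbitrary: i rule: epath.induct)
  case (3 E x y xs)
  then show ?case by (cases i) auto
qed auto

lemma epath_drop: "epath E xs \<Longrightarrow> epath E (drop n xs)"
proof (induction E xs arbitrary: n rule: epath.induct)
  case (3 E x y xs)
  then show ?case
    by (cases n) (auto simp del: drop_Suc_Cons simp: drop_Cons')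
qed (auto simp: drop_Cons')

lemma path_exists:
  assumes "(a, b) \<in> (E \<inter> W \<times> W)\<^sup>*" "b \<in> W"
  shows "\<exists>p. p \<noteq> [] \<and> hd p = a \<and> last p = b \<and> distinct p \<and> set p \<subseteq> W \<and> epath E p"
  using assms
proof (induction rule: converse_rtrancl_induct)
  case base
  then show ?case by (intro exI[of _ "[b]"]) auto
next
  case (step a y)
  then obtain p where p: "p \<noteq> []" "hd p = y" "last p = b" "distinct p" "set p \<subseteq> W" "epath E p"
    by blast
  have aW: "a \<in> W" "(a, y) \<in> E" using step by auto
  show ?case
  proof (cases "a \<in> set p")
    case True
    then obtain i where i: "i < length p" "p ! i = a" by (metis in_set_conv_nth)
    let ?q = "drop i p"
    have "?q \<noteq> []" using i by simp
    moreover have "hd ?q = a" using i by (simp add: hd_drop_conv_nth)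
    moreover have "last ?q = b" using i p by (simp add: last_drop)
    moreover have "distinct ?q" using p by simp
    moreover have "set ?q \<subseteq> W" using p by (meson set_drop_subset subset_trans)
    moreover have "epath E ?q" using p epath_drop by blast
    ultimately show ?thesis by blast
  next
    case False
    have "epath E (a # p)" using p aW by (cases p) auto
    then show ?thesis using p aW False by (intro exI[of _ "a # p"]) auto
  qed
qed

lemma forest_uniq:
  assumes forest: "is_forest V E" and conn: "connected_graph V' (induced_edges E V')"
    and "w \<notin> V'" "w \<in> V" "u \<in> V'" "v \<in> V'" "(w, u) \<in> E" "(w, v) \<in> E" "V' \<subseteq> V"
  shows "u = v"
proof (rule ccontr)
  assume ne: "u \<noteq> v"
  have "(u, v) \<in> (E \<inter> V' \<times> V')\<^sup>*" using conn assms
    by (auto simp: connected_graph_def induced_edges_def)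
  then obtain p where p: "p \<noteq> []" "hd p = u" "last p = v" "distinct p" "set p \<subseteq> V'" "epath E p"
    using path_exists assms by metis
  have symE: "sym E" using forest by (simp add: is_forest_def)
  have "length p \<noteq> 1" using p ne by (cases p) auto
  then have len: "length p \<ge> 2" using p by (cases p) (auto simp: Suc_le_eq)
  let ?xs = "w # p"
  have ep: "epath E ?xs" using p assms by (cases p) auto
  have "is_cycle E ?xs"
    unfolding is_cycle_def
  proof (intro conjI allI impI)
    show "3 \<le> length ?xs" using len by simp
    show "distinct ?xs" using p assms by auto
    fix i assume "i + 1 < length ?xs"
    then show "(?xs ! i, ?xs ! (i + 1)) \<in> E" using epath_nth[OF ep] by blast
  next
    have "last ?xs = v" using p by simp
    then show "(last ?xs, hd ?xs) \<in> E" using assms symE by (auto dest: symD)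
  qed
  moreover have "set ?xs \<subseteq> V" using p assms by auto
  ultimately show False using forest by (auto simp: is_forest_def)
qed


definition rel :: "'v set \<Rightarrow> 'v set \<Rightarrow> ('v \<times> 'v) set \<Rightarrow> 'v set \<Rightarrow> ('v \<times> 'v) set \<Rightarrow> ('v \<Rightarrow> nat option) \<Rightarrow> ('v \<Rightarrow> nat option) \<Rightarrow> bool" where
  "rel V' V E W EW cf ce \<longleftrightarrow> V' \<subseteq> W \<and> W \<subseteq> V \<and> induced_edges E V' \<subseteq> EW \<and> EW \<subseteq> E \<and>
     EW \<subseteq> W \<times> W \<and> (\<forall>x\<in>W. cf x = ce x) \<and>
     (\<forall>x\<in>W - V'. cf x \<noteq> None) \<and>
     (\<forall>v\<in>V'. \<forall>u. (u, v) \<in> E \<longrightarrow> cf u \<noteq> None \<longrightarrow> (u, v) \<in> EW)"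

lemma relD:
  assumes "rel V' V E W EW cf ce"
  shows "V' \<subseteq> W" "W \<subseteq> V" "induced_edges E V' \<subseteq> EW" "EW \<subseteq> E" "EW \<subseteq> W \<times> W"
    "\<And>x. x \<in> W \<Longrightarrow> cf x = ce x" "\<And>x. x \<in> W \<Longrightarrow> x \<notin> V' \<Longrightarrow> cf x \<noteq> None"
    "\<And>v u. v \<in> V' \<Longrightarrow> (u, v) \<in> E \<Longrightarrow> cf u \<noteq> None \<Longrightarrow> (u, v) \<in> EW"
  using assms unfolding rel_def by blast+

lemma legal_fwd:
  assumes R: "rel V' V E W EW cf ce" and l: "legal k E cf v c"
  shows "legal k EW ce v c"
  unfolding legal_def
proof (intro conjI allI impI)
  show "c < k" using l by (simp add: legal_def)
  fix u assume e: "(u, v) \<in> EW"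
  have "(u, v) \<in> E" "u \<in> W" using e relD(4,5)[OF R] by auto
  then show "ce u \<noteq> Some c" using l relD(6)[OF R] by (auto simp: legal_def)
qed

lemma legal_back:
  assumes R: "rel V' V E W EW cf ce" and v: "v \<in> V'" and l: "legal k EW ce v c"
  shows "legal k E cf v c"
  unfolding legal_def
proof (intro conjI allI impI)
  show "c < k" using l by (simp add: legal_def)
  fix u assume e: "(u, v) \<in> E"
  show "cf u \<noteq> Some c"
  proof
    assume cu: "cf u = Some c"
    then have ew: "(u, v) \<in> EW" using relD(8)[OF R v e] by simp
    then have "u \<in> W" using relD(5)[OF R] by auto
    then have "ce u = Some c" using cu relD(6)[OF R] by simp
    then show False using l ew by (auto simp: legal_def)
  qed
qed

lemma stuck_transfer: "stuck k W EW ce \<Longrightarrow> rel V' V E W EW cf ce \<Longrightarrow> stuck k V E cf"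
proof -
  assume st: "stuck k W EW ce" and R: "rel V' V E W EW cf ce"
  then obtain v where v: "v \<in> W" "ce v = None" "\<And>c. \<not> legal k EW ce v c"
    by (auto simp: stuck_def)
  have "v \<in> V" "cf v = None" using R v by (auto simp: rel_def)
  moreover have "\<not> legal k E cf v c" for c using legal_fwd[OF R] v(3) by blast
  ultimately show ?thesis by (auto simp: stuck_def)
qed

context
  fixes k :: nat and V V' :: "'v set" and E :: "('v \<times> 'v) set"
  assumes EV: "E \<subseteq> V \<times> V" and symE: "sym E"
    and uniq: "\<And>w u v. w \<notin> V' \<Longrightarrow> w \<in> V \<Longrightarrow> u \<in> V' \<Longrightarrow> v \<in> V' \<Longrightarrow> (w, u) \<in> E \<Longrightarrow> (w, v) \<in> E \<Longrightarrow> u = v"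
begin

lemma sim:
  shows "ecg_bobA k W EW ce \<Longrightarrow> rel V' V E W EW cf ce \<Longrightarrow> cg_bobA k V E cf"
    and "ecg_bobB k W EW ce \<Longrightarrow> rel V' V E W EW cf ce \<Longrightarrow> cg_bobB k V E cf"
proof (induction arbitrary: cf and cf rule: ecg_bobA_ecg_bobB.inducts)
  case (ecgA_stuck W EW col)
  show ?case by (rule cgA_stuck[OF stuck_transfer[OF ecgA_stuck(1,2)]])
next
  case (ecgB_stuck W EW col)
  show ?case by (rule cgB_stuck[OF stuck_transfer[OF ecgB_stuck(1,2)]])
next
  case (ecgB_move W EW col col')
  from ecgB_move(1) obtain v c where v: "v \<in> W" "col v = None" "legal k EW col v c"
    "col' = col(v := Some c)" by (auto simp: color_move_def)
  have R: "rel V' V E W EW cf col" by fact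
  have cfv: "cf v = None" using relD(6)[OF R v(1)] v(2) by simp
  have vV': "v \<in> V'" using relD(7)[OF R v(1)] cfv by blast
  have lg: "legal k E cf v c" using legal_back[OF R vV' v(3)] .
  have vV: "v \<in> V" using relD(1,2)[OF R] vV' by blast
  have cm: "color_move k V E cf (cf(v := Some c))"
    unfolding color_move_def using vV cfv lg by blast
  have R': "rel V' V E W EW (cf(v := Some c)) col'" unfolding rel_def
  proof (intro conjI ballI allI impI)
    fix x assume "x \<in> W" then show "(cf(v := Some c)) x = col' x" using relD(6)[OF R] v(4) by simp
  next
    fix x assume "x \<in> W - V'" then show "(cf(v := Some c)) x \<noteq> None" using relD(7)[OF R] by simp
  next
    fix y u assume y: "y \<in> V'" and e: "(u, y) \<in> E" and cu: "(cf(v := Some c)) u \<noteq> None"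
    show "(u, y) \<in> EW"
    proof (cases "u = v")
      case True
      then show ?thesis using relD(3)[OF R] y e vV' by (auto simp: induced_edges_def)
    next
      case False
      then show ?thesis using relD(8)[OF R y e] cu by simp
    qed
  qed (rule relD[OF R])+
  show ?case using cgB_move[OF cm] ecgB_move(3)[OF R'] by blast
next
  case (ecgA_move W col EW)
  have R: "rel V' V E W EW cf col" by fact
  note RD = relD[OF R]
  show ?case
  proof (rule cgA_move)
    obtain x where "x \<in> W" "col x = None" using ecgA_move(1) by (auto simp: has_uncolored_def)
    then have "x \<in> V" "cf x = None" using RD(2) RD(6)[of x] by auto
    then show "has_uncolored V cf" by (auto simp: has_uncolored_def)
  next
    fix cf' assume cm: "color_move k V E cf cf'"
    then obtain w c where w: "w \<in> V" "cf w = None" "legal k E cf w c"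
      "cf' = cf(w := Some c)" by (auto simp: color_move_def)
    show "cg_bobB k V E cf'"
    proof (cases "w \<in> V'")
      case True
      have wW: "w \<in> W" using RD(1) True by blast
      have colw: "col w = None" using RD(6)[OF wW] w(2) by simp
      have cm': "color_move k W EW col (col(w := Some c))"
        unfolding color_move_def using wW colw legal_fwd[OF R w(3)] by blast
      have R': "rel V' V E W EW cf' (col(w := Some c))" unfolding rel_def
      proof (intro conjI ballI allI impI)
        fix x assume "x \<in> W" then show "cf' x = (col(w := Some c)) x" using RD(6) w(4) by simp
      next
        fix x assume "x \<in> W - V'" then show "cf' x \<noteq> None" using RD(7) w(4) True by auto
      next
        fix y u assume y: "y \<in> V'" and e: "(u, y) \<in> E" and cu: "cf' u \<noteq> None"
        show "(u, y) \<in> EW"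
        proof (cases "u = w")
          case True
          then show ?thesis using RD(3) y e \<open>w \<in> V'\<close> by (auto simp: induced_edges_def)
        next
          case False
          then show ?thesis using RD(8)[OF y e] cu w(4) by simp
        qed
      qed (rule RD)+
      show ?thesis using ecgA_move(3)[OF cm' R'] .
    next
      case notV': False
      have wW: "w \<notin> W" using RD(7)[of w] w(2) notV' by blast
      show ?thesis
      proof (cases "\<exists>u\<in>V'. (w, u) \<in> E")
        case True
        then obtain u where u: "u \<in> V'" "(w, u) \<in> E" by blast
        have uW: "u \<in> W" using RD(1) u by blast
        have uw: "(u, w) \<in> E" using u(2) symE by (auto dest: symD)
        have ck: "c < k" and cu0: "cf u \<noteq> Some c"
          using w(3) uw unfolding legal_def by blast+
        have cu: "col u \<noteq> Some c" using cu0 RD(6)[OF uW] by simp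
        have R': "rel V' V E (insert w W) (EW \<union> {(w, u), (u, w)}) cf' (col(w := Some c))"
          unfolding rel_def
        proof (intro conjI ballI allI impI)
          show "V' \<subseteq> insert w W" using RD(1) by blast
          show "insert w W \<subseteq> V" using RD(2) w(1) by blast
          show "induced_edges E V' \<subseteq> EW \<union> {(w, u), (u, w)}" using RD(3) by blast
          show "EW \<union> {(w, u), (u, w)} \<subseteq> E" using RD(4) u(2) uw by blast
          show "EW \<union> {(w, u), (u, w)} \<subseteq> insert w W \<times> insert w W" using RD(5) uW by blast
        next
          fix x assume "x \<in> insert w W"
          then show "cf' x = (col(w := Some c)) x" using RD(6) w(4) by auto
        next
          fix x assume "x \<in> insert w W - V'"
          then show "cf' x \<noteq> None" using RD(7) w(4) by auto
        next
          fix v u' assume v: "v \<in> V'" and e: "(u', v) \<in> E" and cu': "cf' u' \<noteq> None"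
          show "(u', v) \<in> EW \<union> {(w, u), (u, w)}"
          proof (cases "u' = w")
            case True
            then have "v = u" using uniq[OF notV' w(1) v u(1)] e u by simp
            then show ?thesis using True by simp
          next
            case False
            then have "cf u' \<noteq> None" using cu' w(4) by simp
            then show ?thesis using RD(8)[OF v e] by simp
          qed
        qed
        show ?thesis by (rule ecgA_move(7)[OF uW wW ck cu R'])
      next
        case False
        have R': "rel V' V E W EW cf' col" unfolding rel_def
        proof (intro conjI ballI allI impI)
          fix v u' assume v: "v \<in> V'" and e: "(u', v) \<in> E" and cu': "cf' u' \<noteq> None"
          have "u' \<noteq> w" using False v e symE by (auto dest: symD)
          then show "(u', v) \<in> EW" using RD(8)[OF v e] cu' w(4) by simp
        next
          fix x assume "x \<in> W"
          then show "cf' x = col x" using RD(6) w(4) wW by auto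
        next
          fix x assume "x \<in> W - V'"
          then show "cf' x \<noteq> None" using RD(7) w(4) wW by auto
        qed (rule RD)+
        show ?thesis using ecgA_move(5)[OF R'] .
      qed
    qed
  qed
qed

end

theorem lemma3p1:
  fixes k :: nat and V V' :: "'v set" and E :: "('v \<times> 'v) set" and col :: "'v \<Rightarrow> nat option"
  assumes "infinite (UNIV :: 'v set)"
    and "k \<ge> 1"
    and "partially_colored_forest k V E col"
    and "V' \<subseteq> V"
    and "connected_graph V' (induced_edges E V')"
    and "\<forall>v\<in>V'. \<forall>u\<in>V - V'. (v, u) \<in> E \<longrightarrow> col u = None"
    and "bob_wins_ECG k V' (induced_edges E V') col"
  shows "bob_wins_coloring_game k V E col"
proof -
  have forest: "is_forest V E" using assms(3) by (simp add: partially_colored_forest_def)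
  have EV: "E \<subseteq> V \<times> V" and symE: "sym E" using forest by (auto simp: is_forest_def)
  have uniq: "u = v" if "w \<notin> V'" "w \<in> V" "u \<in> V'" "v \<in> V'" "(w, u) \<in> E" "(w, v) \<in> E" for w u v
    using forest_uniq[OF forest assms(5) that assms(4)] .
  have R: "rel V' V E V' (induced_edges E V') col col"
    unfolding rel_def
  proof (intro conjI ballI allI impI)
    fix v u assume v: "v \<in> V'" and e: "(u, v) \<in> E" and cu: "col u \<noteq> None"
    have "u \<in> V" using e EV by auto
    moreover have "(v, u) \<in> E" using e symE by (auto dest: symD)
    ultimately have "u \<in> V'"
    proof (rule_tac ccontr)
      assume "u \<in> V" "(v, u) \<in> E" "u \<notin> V'"
      then have "col u = None" using assms(6) v by blast
      then show False using cu by simp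
    qed
    then show "(u, v) \<in> induced_edges E V'" using v e by (simp add: induced_edges_def)
  qed (use assms(4) in \<open>auto simp: induced_edges_def\<close>)
  have G: "ecg_bobA k V' (induced_edges E V') col" using assms(7) by (simp add: bob_wins_ECG_def)
  show ?thesis unfolding bob_wins_coloring_game_def by (rule sim(1)[OF EV symE uniq G R])
qed

end
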